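(* Let $T = (T_1, \ldots, T_n) \in \mathcal{B}(H)^n$ satisfy $\left\| \sum_{i=1}^n \zeta_i T_i \right\| \leq 1$ for all $\zeta_1,\dots,\zeta_n \in \overline{\mathbb{D}}$, and let $p$ be a polynomial in $n$ variables. Then \[ \|p^{\mathrm{sym}}(T)\| \leq \|\Gamma p\|_{\overline{\mathbb{D}}^n}. \]
   Context: $H$ is a Hilbert space, $\mathbb{D}$ the open unit disk, and $\|f\|_X$ the supremum of $|f|$ on $X$. The operators $T_i$ are not assumed to commute. For a polynomial $p$ in $n$ variables, $p^{\mathrm{sym}}(T)$ denotes the symmetrized evaluation of $p$ at $T$: each monomial $z^\alpha = z_1^{\alpha_1}\cdots z_n^{\alpha_n}$ is sent to the average, over all distinct orderings, of the ordered products of $|\alpha|$ operators containing exactly $\alpha_j$ factors equal to $T_j$ for each $j$ (the empty product being $I$), and this is extended linearly to all polynomials. If $p(z) = \sum_\alpha c_\alpha z^\alpha$, then $\Gamma p(z) = \sum_\alpha c_\alpha \frac{\alpha!}{|\alpha|!} z^\alpha$, where $\alpha! = \alpha_1!\cdots\alpha_n!$ and $|\alpha| = \alpha_1+\cdots+\alpha_n$. *)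

theory Defs
  imports "HOL-Analysis.Analysis"
begin

text \<open>A complex Hilbert space is modelled as a real Hilbert space (real_inner, complete_space)
  together with an orthogonal complex structure J (multiplication by the imaginary unit).
  Complex-linear bounded operators are the real bounded linear operators commuting with J.\<close>

definition complex_structure :: "('a::{real_inner,complete_space} \<Rightarrow>\<^sub>L 'a) \<Rightarrow> bool" where
  "complex_structure J \<longleftrightarrow> J o\<^sub>L J = - id_blinfun \<and> (\<forall>x y. inner (J x) (J y) = inner x y)"

definition complex_linear_op :: "('a::real_normed_vector \<Rightarrow>\<^sub>L 'a) \<Rightarrow> ('a \<Rightarrow>\<^sub>L 'a) \<Rightarrow> bool" where
  "complex_linear_op J A \<longleftrightarrow> A o\<^sub>L J = J o\<^sub>L A"

definition cscale :: "('a::real_normed_vector \<Rightarrow>\<^sub>L 'a) \<Rightarrow> complex \<Rightarrow> ('a \<Rightarrow>\<^sub>L 'a) \<Rightarrow> ('a \<Rightarrow>\<^sub>L 'a)" where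
  "cscale J c A = Re c *\<^sub>R A + Im c *\<^sub>R (J o\<^sub>L A)"

definition word_prod :: "('n \<Rightarrow> ('a::real_normed_vector \<Rightarrow>\<^sub>L 'a)) \<Rightarrow> 'n list \<Rightarrow> ('a \<Rightarrow>\<^sub>L 'a)" where
  "word_prod T w = foldr (\<lambda>i A. T i o\<^sub>L A) w id_blinfun"

definition mi_deg :: "('n::finite \<Rightarrow> nat) \<Rightarrow> nat" where
  "mi_deg \<alpha> = (\<Sum>j\<in>UNIV. \<alpha> j)"

definition orderings :: "('n::finite \<Rightarrow> nat) \<Rightarrow> 'n list set" where
  "orderings \<alpha> = {w. length w = mi_deg \<alpha> \<and> (\<forall>j. count_list w j = \<alpha> j)}"

definition sym_monomial :: "('n::finite \<Rightarrow> ('a::real_normed_vector \<Rightarrow>\<^sub>L 'a)) \<Rightarrow> ('n \<Rightarrow> nat) \<Rightarrow> ('a \<Rightarrow>\<^sub>L 'a)" where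
  "sym_monomial T \<alpha> = (1 / real (card (orderings \<alpha>))) *\<^sub>R (\<Sum>w\<in>orderings \<alpha>. word_prod T w)"

text \<open>A polynomial in the variables indexed by 'n is a finitely supported coefficient function
  on multi-indices.\<close>
definition is_poly :: "(('n \<Rightarrow> nat) \<Rightarrow> complex) \<Rightarrow> bool" where
  "is_poly c \<longleftrightarrow> finite {\<alpha>. c \<alpha> \<noteq> 0}"

definition poly_eval :: "(('n::finite \<Rightarrow> nat) \<Rightarrow> complex) \<Rightarrow> ('n \<Rightarrow> complex) \<Rightarrow> complex" where
  "poly_eval c z = (\<Sum>\<alpha>\<in>{\<alpha>. c \<alpha> \<noteq> 0}. c \<alpha> * (\<Prod>j\<in>UNIV. z j ^ \<alpha> j))"

definition sym_eval :: "('a::real_normed_vector \<Rightarrow>\<^sub>L 'a) \<Rightarrow> (('n::finite \<Rightarrow> nat) \<Rightarrow> complex)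
    \<Rightarrow> ('n \<Rightarrow> ('a \<Rightarrow>\<^sub>L 'a)) \<Rightarrow> ('a \<Rightarrow>\<^sub>L 'a)" where
  "sym_eval J c T = (\<Sum>\<alpha>\<in>{\<alpha>. c \<alpha> \<noteq> 0}. cscale J (c \<alpha>) (sym_monomial T \<alpha>))"

definition Gamma_poly :: "(('n::finite \<Rightarrow> nat) \<Rightarrow> complex) \<Rightarrow> (('n \<Rightarrow> nat) \<Rightarrow> complex)" where
  "Gamma_poly c = (\<lambda>\<alpha>. c \<alpha> * of_real ((\<Prod>j\<in>UNIV. fact (\<alpha> j)) / fact (mi_deg \<alpha>)))"

definition closed_polydisc :: "('n \<Rightarrow> complex) set" where
  "closed_polydisc = {z. \<forall>j. norm (z j) \<le> 1}"

definition sup_norm_polydisc :: "(('n::finite \<Rightarrow> nat) \<Rightarrow> complex) \<Rightarrow> real" where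
  "sup_norm_polydisc c = (SUP z\<in>closed_polydisc. norm (poly_eval c z))"

end

theory Submission
  imports Defs "HOL-Combinatorics.Multiset_Permutations"
begin


definition cmul :: "('a::real_normed_vector \<Rightarrow>\<^sub>L 'a) \<Rightarrow> complex \<Rightarrow> 'a \<Rightarrow> 'a" where
  "cmul J c x = Re c *\<^sub>R x + Im c *\<^sub>R J x"

definition cinner :: "('a::real_inner \<Rightarrow>\<^sub>L 'a) \<Rightarrow> 'a \<Rightarrow> 'a \<Rightarrow> complex" where
  "cinner J x y = Complex (inner x y) (inner x (J y))"

lemma cs_JJ: assumes "complex_structure J" shows "J (J x) = - x"
proof -
  have "(J o\<^sub>L J) x = (- id_blinfun) x" using assms unfolding complex_structure_def by simp
  thus ?thesis by (simp add: uminus_blinfun.rep_eq)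
qed

lemma cs_inner: assumes "complex_structure J" shows "inner (J x) (J y) = inner x y"
  using assms unfolding complex_structure_def by simp

lemma cs_inner_swap: assumes "complex_structure J" shows "inner (J x) y = - inner x (J y)"
proof -
  have "inner (J x) y = inner (J (J x)) (J y)" using cs_inner[OF assms] by simp
  also have "\<dots> = - inner x (J y)" using cs_JJ[OF assms] by simp
  finally show ?thesis .
qed

lemma cs_inner_self: assumes "complex_structure J" shows "inner x (J x) = 0"
  using cs_inner_swap[OF assms, of x x] by (simp add: inner_commute)

lemma cs_norm: assumes "complex_structure J" shows "norm (J x) = norm x"
  using cs_inner[OF assms, of x x] by (simp add: norm_eq_sqrt_inner)

lemma cscale_apply: "blinfun_apply (cscale J c A) x = cmul J c (A x)"
  by (simp add: cscale_def cmul_def blinfun.bilinear_simps)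

lemma cmul_add_left: "cmul J (c + d) x = cmul J c x + cmul J d x"
  by (simp add: cmul_def algebra_simps scaleR_add_left)

lemma cmul_add_right: "cmul J c (x + y) = cmul J c x + cmul J c y"
  by (simp add: cmul_def algebra_simps blinfun.add_right)

lemma cmul_diff_left: "cmul J (c - d) x = cmul J c x - cmul J d x"
  by (simp add: cmul_def algebra_simps)

lemma cmul_zero_left[simp]: "cmul J 0 x = 0" by (simp add: cmul_def)
lemma cmul_zero_right[simp]: "cmul J c 0 = 0" by (simp add: cmul_def)
lemma cmul_one[simp]: "cmul J 1 x = x" by (simp add: cmul_def)
lemma cmul_of_real: "cmul J (of_real r) x = r *\<^sub>R x" by (simp add: cmul_def)

lemma cmul_sum_left: "cmul J (\<Sum>i\<in>I. f i) x = (\<Sum>i\<in>I. cmul J (f i) x)"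
  by (induction I rule: infinite_finite_induct) (auto simp: cmul_add_left)

lemma cmul_sum_right: "cmul J c (\<Sum>i\<in>I. f i) = (\<Sum>i\<in>I. cmul J c (f i))"
  by (induction I rule: infinite_finite_induct) (auto simp: cmul_add_right)

lemma cmul_scaleR_right: "cmul J c (r *\<^sub>R x) = r *\<^sub>R cmul J c x"
  by (simp add: cmul_def blinfun.scaleR_right algebra_simps)

lemma cmul_mult: assumes "complex_structure J"
  shows "cmul J (c * d) x = cmul J c (cmul J d x)"
  using cs_JJ[OF assms]
  by (simp add: cmul_def blinfun.bilinear_simps algebra_simps scaleR_add_left)

lemma cl_J: assumes "complex_linear_op J X" shows "X (J x) = J (X x)"
proof -
  have "(X o\<^sub>L J) x = (J o\<^sub>L X) x" using assms unfolding complex_linear_op_def by simp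
  thus ?thesis by simp
qed

lemma cl_cmul: assumes "complex_linear_op J X" shows "X (cmul J c x) = cmul J c (X x)"
  using cl_J[OF assms] by (simp add: cmul_def blinfun.bilinear_simps)

lemma cinner_Re: "Re (cinner J x y) = inner x y" by (simp add: cinner_def)

lemma cinner_cmul_left: assumes "complex_structure J"
  shows "cinner J (cmul J c x) y = c * cinner J x y"
  using cs_inner_swap[OF assms, of x y] cs_inner[OF assms, of x y]
  by (simp add: cinner_def cmul_def complex_eq_iff inner_add_left algebra_simps)

lemma cinner_cmul_right: assumes "complex_structure J"
  shows "cinner J x (cmul J c y) = cnj c * cinner J x y"
  using cs_JJ[OF assms, of y]
  by (simp add: cinner_def cmul_def complex_eq_iff inner_add_right blinfun.bilinear_simps algebra_simps)

lemma cinner_add_left: "cinner J (x + y) z = cinner J x z + cinner J y z"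
  by (simp add: cinner_def complex_eq_iff inner_add_left)
lemma cinner_sum_left: "cinner J (\<Sum>i\<in>I. f i) z = (\<Sum>i\<in>I. cinner J (f i) z)"
  by (induction I rule: infinite_finite_induct) (auto simp: cinner_add_left cinner_def complex_eq_iff inner_add_left)

lemma norm_cmul: assumes "complex_structure J" shows "norm (cmul J c x) = norm c * norm x"
proof -
  have "(norm (cmul J c x))^2 = inner (cmul J c x) (cmul J c x)" by (simp add: power2_norm_eq_inner)
  also have "\<dots> = (Re c)^2 * inner x x + (Im c)^2 * inner x x"
    using cs_inner_self[OF assms, of x] cs_inner[OF assms, of x x]
    by (simp add: cmul_def inner_add_left inner_add_right inner_commute algebra_simps power2_eq_square)
  also have "\<dots> = (Re c)^2 * (norm x)^2 + (Im c)^2 * (norm x)^2" by (simp add: power2_norm_eq_inner)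
  also have "\<dots> = (norm c * norm x)^2" by (simp add: cmod_def power_mult_distrib algebra_simps)
  finally show ?thesis by (simp add: power2_eq_iff_nonneg)
qed

lemma norm_cscale: assumes "complex_structure J" shows "norm (cscale J c A) \<le> norm c * norm A"
  by (rule norm_blinfun_bound) (auto simp: cscale_apply norm_cmul[OF assms] mult.assoc intro!: mult_left_mono norm_blinfun)



primrec opow :: "('a::real_normed_vector \<Rightarrow>\<^sub>L 'a) \<Rightarrow> nat \<Rightarrow> ('a \<Rightarrow>\<^sub>L 'a)" where
  "opow A 0 = id_blinfun" | "opow A (Suc k) = A o\<^sub>L opow A k"

lemma opow_apply_Suc: "opow A (Suc k) x = A (opow A k x)" by simp

lemma norm_opow_apply: assumes "norm A \<le> 1" shows "norm (opow A k x) \<le> norm x"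
proof (induction k)
  case (Suc k)
  have "norm (A (opow A k x)) \<le> norm A * norm (opow A k x)" by (rule norm_blinfun)
  also have "\<dots> \<le> 1 * norm (opow A k x)" using assms by (intro mult_right_mono) auto
  finally show ?case using Suc by simp
qed simp

lemma norm_opow: assumes "norm A \<le> 1" shows "norm (opow A k) \<le> 1"
  by (rule norm_blinfun_bound) (auto simp: norm_opow_apply[OF assms])

lemma opow_cmul: assumes "complex_linear_op J A"
  shows "opow A k (cmul J c x) = cmul J c (opow A k x)"
  by (induction k) (auto simp: cl_cmul[OF assms])

lemma J_cmul: assumes "complex_structure J" shows "J (cmul J c y) = cmul J c (J y)"
  by (simp add: cmul_def blinfun.bilinear_simps)

lemma cl_cscale: assumes "complex_structure J" "complex_linear_op J A"
  shows "complex_linear_op J (cscale J c A)"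
  unfolding complex_linear_op_def
  by (rule blinfun_eqI) (simp add: cscale_apply cl_J[OF assms(2)] J_cmul[OF assms(1)])

lemma cl_add: assumes "complex_linear_op J A" "complex_linear_op J B"
  shows "complex_linear_op J (A + B)"
  using assms unfolding complex_linear_op_def
  by (intro blinfun_eqI) (simp add: blinfun.add_right plus_blinfun.rep_eq cl_J[OF assms(1)] cl_J[OF assms(2)] flip: complex_linear_op_def)

lemma cl_zero: "complex_linear_op J 0"
  unfolding complex_linear_op_def by simp

lemma cl_sum: assumes "\<And>i. i \<in> I \<Longrightarrow> complex_linear_op J (A i)"
  shows "complex_linear_op J (\<Sum>i\<in>I. A i)"
  using assms by (induction I rule: infinite_finite_induct) (auto intro: cl_add cl_zero)

lemma opow_cscale: assumes "complex_structure J" "complex_linear_op J A"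
  shows "opow (cscale J c A) k x = cmul J (c ^ k) (opow A k x)"
proof (induction k)
  case (Suc k)
  then show ?case
    by (simp add: cscale_apply cl_cmul[OF assms(2)] cmul_mult[OF assms(1)])
qed simp

definition wsum :: "('a::real_normed_vector \<Rightarrow>\<^sub>L 'a) \<Rightarrow> 'a \<Rightarrow> nat \<Rightarrow> 'a" where
  "wsum B u N = (\<Sum>k<N. opow B k u)"

lemma wsum_Suc: "wsum B u (Suc N) = u + B (wsum B u N)"
  unfolding wsum_def by (simp add: sum.lessThan_Suc_shift blinfun.sum_right del: sum.lessThan_Suc)

lemma pos_identity:
  fixes B :: "'a::real_inner \<Rightarrow>\<^sub>L 'a"
  shows "2 * (\<Sum>k<N. real (N - k) * inner (opow B k u) u) - real N * inner u u
   = (norm (wsum B u N))^2 + (\<Sum>i<N. (norm (wsum B u i))^2 - (norm (B (wsum B u i)))^2)"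
proof (induction N)
  case 0
  then show ?case by (simp add: wsum_def)
next
  case (Suc N)
  have e1: "(\<Sum>k<Suc N. real (Suc N - k) * inner (opow B k u) u)
      = (\<Sum>k<N. real (N - k) * inner (opow B k u) u) + (\<Sum>k<Suc N. inner (opow B k u) u)"
  proof -
    have "(\<Sum>k<Suc N. real (Suc N - k) * inner (opow B k u) u)
        = (\<Sum>k<Suc N. real (N - k) * inner (opow B k u) u + inner (opow B k u) u)"
      by (intro sum.cong refl) (auto simp: Suc_diff_le of_nat_Suc algebra_simps)
    also have "\<dots> = (\<Sum>k<Suc N. real (N - k) * inner (opow B k u) u) + (\<Sum>k<Suc N. inner (opow B k u) u)"
      by (simp add: sum.distrib)
    finally show ?thesis by simp
  qed
  have e2: "(\<Sum>k<Suc N. inner (opow B k u) u) = inner (wsum B u (Suc N)) u"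
    unfolding wsum_def by (simp add: inner_sum_left inner_add_left)
  have e3: "(norm (u + B (wsum B u N)))^2 = (norm u)^2 + 2 * inner (B (wsum B u N)) u + (norm (B (wsum B u N)))^2"
    by (simp add: power2_norm_eq_inner inner_add_left inner_add_right inner_commute)
  have e4: "inner (u + B (wsum B u N)) u = (norm u)^2 + inner (B (wsum B u N)) u"
    by (simp add: power2_norm_eq_inner inner_add_left)
  show ?case
    using Suc.IH e1 e2 e3 e4 by (simp add: wsum_Suc power2_norm_eq_inner algebra_simps)
qed

lemma pos_form:
  fixes B :: "'a::real_inner \<Rightarrow>\<^sub>L 'a"
  assumes "norm B \<le> 1"
  shows "0 \<le> 2 * (\<Sum>k<N. real (N - k) * inner (opow B k u) u) - real N * inner u u"
proof -
  have "\<And>i. (norm (B (wsum B u i)))^2 \<le> (norm (wsum B u i))^2"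
  proof -
    fix i
    have "norm (B (wsum B u i)) \<le> norm B * norm (wsum B u i)" by (rule norm_blinfun)
    also have "\<dots> \<le> norm (wsum B u i)" using assms by (simp add: mult_left_le_one_le)
    finally show "(norm (B (wsum B u i)))^2 \<le> (norm (wsum B u i))^2"
      by (simp add: power_mono)
  qed
  hence "0 \<le> (\<Sum>i<N. (norm (wsum B u i))^2 - (norm (B (wsum B u i)))^2)"
    by (intro sum_nonneg) auto
  thus ?thesis unfolding pos_identity by simp
qed

definition Rf :: "('a::real_inner \<Rightarrow>\<^sub>L 'a) \<Rightarrow> nat \<Rightarrow> 'a \<Rightarrow> 'a \<Rightarrow> real" where
  "Rf B N u v = (\<Sum>k<N. real (N - k) * (inner (opow B k u) v + inner u (opow B k v))) - real N * inner u v"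

lemma Rf_self: "Rf B N u u = 2 * (\<Sum>k<N. real (N - k) * inner (opow B k u) u) - real N * inner u u"
proof -
  have *: "\<And>k. inner u (opow B k u) = inner (opow B k u) u" by (rule inner_commute)
  show ?thesis unfolding Rf_def by (simp add: * sum_distrib_left algebra_simps)
qed

lemma Rf_nonneg: assumes "norm B \<le> 1" shows "0 \<le> Rf B N u u"
  unfolding Rf_self by (rule pos_form[OF assms])

lemma term_quad:
  fixes C :: "'a::real_inner \<Rightarrow>\<^sub>L 'a"
  shows "inner (C (s *\<^sub>R u - v)) (s *\<^sub>R u - v) + inner (s *\<^sub>R u - v) (C (s *\<^sub>R u - v))
    = s^2 * (inner (C u) u + inner u (C u)) - 2 * s * (inner (C u) v + inner u (C v))
      + (inner (C v) v + inner v (C v))"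
  by (simp add: blinfun.diff_right blinfun.scaleR_right inner_diff_left inner_diff_right
      inner_commute[of "C u" v] inner_commute[of u "C v"] algebra_simps power2_eq_square)

lemma Rf_quad: "Rf B N (s *\<^sub>R u - v) (s *\<^sub>R u - v) = s^2 * Rf B N u u - 2 * s * Rf B N u v + Rf B N v v"
proof -
  have "Rf B N (s *\<^sub>R u - v) (s *\<^sub>R u - v) =
    (\<Sum>k<N. real (N - k) * (s^2 * (inner (opow B k u) u + inner u (opow B k u)) - 2 * s * (inner (opow B k u) v + inner u (opow B k v))
      + (inner (opow B k v) v + inner v (opow B k v)))) - real N * inner (s *\<^sub>R u - v) (s *\<^sub>R u - v)"
    unfolding Rf_def term_quad ..
  also have "\<dots> = s^2 * Rf B N u u - 2 * s * Rf B N u v + Rf B N v v"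
  proof -
    define X where "X k = inner (opow B k u) u + inner u (opow B k u)" for k
    define Y where "Y k = inner (opow B k u) v + inner u (opow B k v)" for k
    define Z where "Z k = inner (opow B k v) v + inner v (opow B k v)" for k
    have s1: "(\<Sum>k<N. real (N - k) * (s^2 * X k - 2 * s * Y k + Z k))
      = s^2 * (\<Sum>k<N. real (N - k) * X k) - 2 * s * (\<Sum>k<N. real (N - k) * Y k) + (\<Sum>k<N. real (N - k) * Z k)"
      by (simp add: sum.distrib sum_subtractf sum_distrib_left algebra_simps)
    have s2: "inner (s *\<^sub>R u - v) (s *\<^sub>R u - v) = s^2 * inner u u - 2 * s * inner u v + inner v v"
      by (simp add: inner_diff_left inner_diff_right inner_commute[of v u] power2_eq_square algebra_simps)
    show ?thesis unfolding Rf_def X_def[symmetric] Y_def[symmetric] Z_def[symmetric] s1 s2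
      by (simp add: algebra_simps)
  qed
  finally show ?thesis .
qed

lemma Rf_CS:
  assumes "norm B \<le> 1" "t > 0"
  shows "2 * Rf B N u v \<le> t * Rf B N u u + Rf B N v v / t"
proof -
  have "0 \<le> Rf B N (t *\<^sub>R u - v) (t *\<^sub>R u - v)" by (rule Rf_nonneg[OF assms(1)])
  hence "0 \<le> t^2 * Rf B N u u - 2 * t * Rf B N u v + Rf B N v v" by (simp add: Rf_quad)
  hence "2 * t * Rf B N u v \<le> t * (t * Rf B N u u + Rf B N v v / t)"
    using assms(2) by (simp add: algebra_simps power2_eq_square)
  hence "t * (2 * Rf B N u v) \<le> t * (t * Rf B N u u + Rf B N v v / t)" by (simp add: algebra_simps)
  thus ?thesis using assms(2) by (simp add: mult_le_cancel_left_pos)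
qed



definition rU :: "nat \<Rightarrow> complex set" where "rU K = {z. z ^ K = 1}"

lemma rU_finite: "K > 0 \<Longrightarrow> finite (rU K)"
  unfolding rU_def by (rule finite_roots_unity) simp

lemma rU_card: "K > 0 \<Longrightarrow> card (rU K) = K"
  unfolding rU_def by (rule card_roots_unity_eq)

lemma rU_norm: assumes "K > 0" "z \<in> rU K" shows "norm z = 1"
proof -
  have "norm z ^ K = 1 ^ K" using assms by (simp add: rU_def flip: norm_power)
  thus ?thesis using assms(1) by (subst (asm) power_eq_iff_eq_base) auto
qed

lemma rU_cnj: assumes "K > 0" "z \<in> rU K" shows "z * cnj z = 1"
proof -
  have "z * cnj z = of_real ((norm z)^2)" by (rule complex_norm_square[symmetric])
  thus ?thesis using rU_norm[OF assms] by simp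
qed

lemma rU_sum_pow: assumes "K > 0" "0 < d" "d < K" shows "(\<Sum>z\<in>rU K. z ^ d) = 0"
proof -
  define \<omega> where "\<omega> = cis (2 * pi / real K)"
  have bij: "bij_betw (\<lambda>k. cis (2 * pi * real k / real K)) {..<K} {z. z ^ K = 1}"
    by (rule Complex.bij_betw_roots_unity) fact
  have fk: "cis (2 * pi * real k / real K) = \<omega> ^ k" for k
    unfolding \<omega>_def Complex.DeMoivre by (rule arg_cong[where f=cis]) (simp add: field_simps)
  have "cis (2 * pi * real d / real K) \<noteq> cis (2 * pi * real 0 / real K)"
  proof -
    have inj: "inj_on (\<lambda>k. cis (2 * pi * real k / real K)) {..<K}" using bij by (simp add: bij_betw_def)
    show ?thesis using inj_on_contraD[OF inj, of d 0] assms by simp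
  qed
  hence wd: "\<omega> ^ d \<noteq> 1" using fk[of d] by simp
  have w: "\<omega> \<in> rU K"
  proof -
    have "\<omega> ^ K = cis (2 * pi)" unfolding \<omega>_def Complex.DeMoivre using assms(1) by simp
    thus ?thesis by (simp add: rU_def)
  qed
  have w0: "\<omega> \<noteq> 0" by (simp add: \<omega>_def)
  have bij2: "bij_betw (\<lambda>z. \<omega> * z) (rU K) (rU K)"
  proof (rule bij_betw_imageI)
    show "inj_on (\<lambda>z. \<omega> * z) (rU K)" using w0 by (auto simp: inj_on_def)
    show "(\<lambda>z. \<omega> * z) ` rU K = rU K"
    proof
      show "(\<lambda>z. \<omega> * z) ` rU K \<subseteq> rU K" using w by (auto simp: rU_def power_mult_distrib)
      show "rU K \<subseteq> (\<lambda>z. \<omega> * z) ` rU K"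
      proof
        fix z assume z: "z \<in> rU K"
        have "(z / \<omega>) ^ K = 1" using z w by (simp add: rU_def power_divide)
        hence "z / \<omega> \<in> rU K" by (simp add: rU_def)
        moreover have "z = \<omega> * (z / \<omega>)" using w0 by simp
        ultimately show "z \<in> (\<lambda>z. \<omega> * z) ` rU K" by blast
      qed
    qed
  qed
  have "(\<Sum>z\<in>rU K. z ^ d) = (\<Sum>z\<in>rU K. (\<omega> * z) ^ d)"
    using sum.reindex_bij_betw[OF bij2, of "\<lambda>z. z ^ d"] by simp
  also have "\<dots> = \<omega> ^ d * (\<Sum>z\<in>rU K. z ^ d)" by (simp add: power_mult_distrib sum_distrib_left)
  finally have eq: "(\<Sum>z\<in>rU K. z ^ d) = \<omega> ^ d * (\<Sum>z\<in>rU K. z ^ d)" .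
  have "(1 - \<omega> ^ d) * (\<Sum>z\<in>rU K. z ^ d) = (\<Sum>z\<in>rU K. z ^ d) - \<omega> ^ d * (\<Sum>z\<in>rU K. z ^ d)"
    by (simp only: left_diff_distrib mult_1)
  also have "\<dots> = 0" by (simp only: eq[symmetric] diff_self)
  finally have "(1 - \<omega> ^ d) * (\<Sum>z\<in>rU K. z ^ d) = 0" .
  thus ?thesis using wd by simp
qed

lemma rU_orth: assumes "K > 0" "p < K" "q < K"
  shows "(\<Sum>z\<in>rU K. z ^ p * cnj z ^ q) = (if p = q then of_nat K else 0)"
proof (cases "q \<le> p")
  case True
  have "\<And>z. z \<in> rU K \<Longrightarrow> z ^ p * cnj z ^ q = z ^ (p - q)"
  proof -
    fix z assume z: "z \<in> rU K"
    have "z ^ p * cnj z ^ q = z ^ (p - q) * (z * cnj z) ^ q"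
      using True by (simp add: power_mult_distrib flip: power_add)
    thus "z ^ p * cnj z ^ q = z ^ (p - q)" using rU_cnj[OF assms(1) z] by simp
  qed
  hence "(\<Sum>z\<in>rU K. z ^ p * cnj z ^ q) = (\<Sum>z\<in>rU K. z ^ (p - q))" by (rule sum.cong[OF refl])
  also have "\<dots> = (if p = q then of_nat K else 0)"
  proof (cases "p = q")
    case True thus ?thesis using rU_card[OF assms(1)] by simp
  next
    case False thus ?thesis using \<open>q \<le> p\<close> assms by (simp add: rU_sum_pow)
  qed
  finally show ?thesis .
next
  case False
  have "\<And>z. z \<in> rU K \<Longrightarrow> z ^ p * cnj z ^ q = cnj (z ^ (q - p))"
  proof -
    fix z assume z: "z \<in> rU K"
    have "z ^ p * cnj z ^ q = cnj z ^ (q - p) * (z * cnj z) ^ p"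
      using False by (simp add: power_mult_distrib mult_ac flip: power_add)
    thus "z ^ p * cnj z ^ q = cnj (z ^ (q - p))" using rU_cnj[OF assms(1) z] by simp
  qed
  hence "(\<Sum>z\<in>rU K. z ^ p * cnj z ^ q) = cnj (\<Sum>z\<in>rU K. z ^ (q - p))"
    by (simp add: cnj_sum)
  also have "\<dots> = 0" using False assms by (simp add: rU_sum_pow)
  finally show ?thesis using False by simp
qed

lemma torus_orth:
  fixes p q :: "'n::finite \<Rightarrow> nat"
  assumes "K > 0" "\<And>j. p j < K" "\<And>j. q j < K"
  shows "(\<Sum>\<zeta>\<in>PiE UNIV (\<lambda>_. rU K). \<Prod>j\<in>UNIV. \<zeta> j ^ p j * cnj (\<zeta> j) ^ q j)
     = (if p = q then of_nat K ^ CARD('n) else 0)"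
proof -
  have "(\<Sum>\<zeta>\<in>PiE UNIV (\<lambda>_. rU K). \<Prod>j\<in>UNIV. \<zeta> j ^ p j * cnj (\<zeta> j) ^ q j)
      = (\<Prod>j\<in>UNIV. \<Sum>z\<in>rU K. z ^ p j * cnj z ^ q j)"
    by (rule prod_sum_PiE[symmetric]) (auto simp: rU_finite[OF assms(1)])
  also have "\<dots> = (\<Prod>j\<in>UNIV. if p j = q j then of_nat K else 0)"
    using rU_orth[OF assms(1) assms(2) assms(3)] by simp
  also have "\<dots> = (if p = q then of_nat K ^ CARD('n) else 0)"
  proof (cases "p = q")
    case False
    then obtain j where "p j \<noteq> q j" by auto
    thus ?thesis using False by (intro trans[OF prod_zero]) auto
  qed simp
  finally show ?thesis .
qed



definition Cf :: "('a::real_inner \<Rightarrow>\<^sub>L 'a) \<Rightarrow> ('a \<Rightarrow>\<^sub>L 'a) \<Rightarrow> nat \<Rightarrow> 'a \<Rightarrow> 'a \<Rightarrow> complex" where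
  "Cf J B N u v = (\<Sum>k<N. of_nat (N - k) * (cinner J (opow B k u) v + cinner J u (opow B k v)))
     - of_nat N * cinner J u v"

lemma Rf_Cf: "Rf B N u v = Re (Cf J B N u v)"
  unfolding Rf_def Cf_def by (simp add: Re_sum cinner_Re)

lemma Cf_cmul_left: assumes "complex_structure J" "complex_linear_op J B"
  shows "Cf J B N (cmul J c u) v = c * Cf J B N u v"
  unfolding Cf_def
  by (simp add: opow_cmul[OF assms(2)] cinner_cmul_left[OF assms(1)] sum_distrib_left algebra_simps)

lemma cinner_cmul_right': assumes "complex_structure J"
  shows "cinner J x (cmul J c y) = cnj c * cinner J x y"
  by (rule cinner_cmul_right[OF assms])

lemma Cf_cmul_right: assumes "complex_structure J" "complex_linear_op J B"
  shows "Cf J B N u (cmul J c v) = cnj c * Cf J B N u v"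
  unfolding Cf_def
  by (simp add: opow_cmul[OF assms(2)] cinner_cmul_right[OF assms(1)] sum_distrib_left algebra_simps)

lemma Cf_rot: assumes "complex_structure J" "complex_linear_op J A"
  shows "Cf J (cscale J (cnj z) A) N u v =
    (\<Sum>k<N. of_nat (N - k) * (cnj z ^ k * cinner J (opow A k u) v + z ^ k * cinner J u (opow A k v)))
     - of_nat N * cinner J u v"
  unfolding Cf_def
  by (simp add: opow_cscale[OF assms] cinner_cmul_left[OF assms(1)] cinner_cmul_right[OF assms(1)])

lemma avg_Cf:
  assumes cs: "complex_structure J" and cl: "complex_linear_op J A" and dN: "d < N"
  shows "(\<Sum>z\<in>rU (2*N). z ^ d * Cf J (cscale J (cnj z) A) N x y)
      = of_nat (2*N) * of_nat (N - d) * cinner J (opow A d x) y"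
proof -
  define K where "K = 2 * N"
  have K0: "K > 0" using dN by (simp add: K_def)
  define a where "a k = cinner J (opow A k x) y" for k
  define c where "c k = cinner J x (opow A k y)" for k
  have c0: "c 0 = cinner J x y" by (simp add: c_def)
  have "(\<Sum>z\<in>rU K. z ^ d * Cf J (cscale J (cnj z) A) N x y)
     = (\<Sum>z\<in>rU K. (\<Sum>k<N. of_nat (N - k) * ((z ^ d * cnj z ^ k) * a k + (z ^ (d + k) * cnj z ^ 0) * c k))
          - of_nat N * ((z ^ d * cnj z ^ 0) * c 0))"
    unfolding Cf_rot[OF cs cl] a_def c_def
    by (intro sum.cong refl) (simp add: sum_distrib_left right_diff_distrib algebra_simps power_add)
  also have "\<dots> = (\<Sum>k<N. of_nat (N - k) * ((\<Sum>z\<in>rU K. z ^ d * cnj z ^ k) * a k + (\<Sum>z\<in>rU K. z ^ (d + k) * cnj z ^ 0) * c k))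
          - of_nat N * ((\<Sum>z\<in>rU K. z ^ d * cnj z ^ 0) * c 0)"
    by (simp add: sum_subtractf sum.swap[of _ "rU K" "{..<N}"] sum_distrib_left sum_distrib_right
        sum.distrib algebra_simps)
  also have "\<dots> = (\<Sum>k<N. of_nat (N - k) * ((if d = k then of_nat K else 0) * a k + (if d + k = 0 then of_nat K else 0) * c k))
          - of_nat N * ((if d = 0 then of_nat K else 0) * c 0)"
  proof -
    have o1: "\<And>k. k < N \<Longrightarrow> (\<Sum>z\<in>rU K. z ^ d * cnj z ^ k) = (if d = k then of_nat K else 0)"
      using dN by (intro rU_orth[OF K0]) (auto simp: K_def)
    have o2: "\<And>k. k < N \<Longrightarrow> (\<Sum>z\<in>rU K. z ^ (d + k) * cnj z ^ 0) = (if d + k = 0 then of_nat K else 0)"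
      using dN by (intro rU_orth[OF K0]) (auto simp: K_def)
    have o3: "(\<Sum>z\<in>rU K. z ^ d * cnj z ^ 0) = (if d = 0 then of_nat K else 0)"
      using dN by (intro rU_orth[OF K0]) (auto simp: K_def)
    have "(\<Sum>k<N. of_nat (N - k) * ((\<Sum>z\<in>rU K. z ^ d * cnj z ^ k) * a k + (\<Sum>z\<in>rU K. z ^ (d + k) * cnj z ^ 0) * c k))
      = (\<Sum>k<N. of_nat (N - k) * ((if d = k then of_nat K else 0) * a k + (if d + k = 0 then of_nat K else 0) * c k))"
      by (rule sum.cong[OF refl]) (simp only: lessThan_iff o1 o2)
    thus ?thesis by (simp only: o3)
  qed
  also have "\<dots> = of_nat K * of_nat (N - d) * a d"
  proof -
    have s1: "(\<Sum>k<N. of_nat (N - k) * ((if d = k then of_nat K else 0) * a k + (if d + k = 0 then of_nat K else 0) * c k))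
       = (\<Sum>k<N. (if k = d then of_nat (N - k) * of_nat K * a k else 0) + (if k = 0 then (if d = 0 then of_nat (N - k) * of_nat K * c k else 0) else 0))"
      by (rule sum.cong[OF refl]) (auto simp: algebra_simps)
    show ?thesis unfolding s1 sum.distrib using dN by (cases "d = 0") (simp_all add: sum.delta c0 algebra_simps)
  qed
  finally show ?thesis by (simp add: K_def a_def)
qed

lemma frac_lt: fixes s x :: real assumes "0 < s" "0 \<le> x" shows "x * s / (x + 1) < s"
proof -
  have "x / (x + 1) < 1" using assms by simp
  hence "s * (x / (x + 1)) < s * 1" using assms by (intro mult_strict_left_mono) auto
  thus ?thesis by (simp add: mult.commute)
qed

lemma amgm_bound:
  fixes s a b M :: real
  assumes H: "\<And>t. t > 0 \<Longrightarrow> 2 * s \<le> t * a^2 + M^2 * b^2 / t" and "a \<ge> 0" "b \<ge> 0" "M \<ge> 0"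
  shows "s \<le> M * a * b"
proof (cases "s \<le> 0")
  case True thus ?thesis using assms(2-4) by (meson mult_nonneg_nonneg order_trans)
next
  case False
  hence s: "s > 0" by simp
  show ?thesis
  proof (cases "a > 0 \<and> M * b > 0")
    case True
    have "2 * s \<le> (M * b / a) * a^2 + M^2 * b^2 / (M * b / a)" using H[of "M * b / a"] True by simp
    also have "\<dots> = 2 * (M * a * b)" using True by (simp add: field_simps power2_eq_square)
    finally show ?thesis by simp
  next
    case False
    have mb: "0 \<le> M * b" using assms by simp
    hence "a = 0 \<or> M * b = 0" using False assms(2) by linarith
    thus ?thesis
    proof
      assume a0: "a = 0"
      define t where "t = (M^2 * b^2 + 1) / s"
      have t0: "t > 0" using s by (simp add: t_def add_nonneg_pos)
      have "2 * s \<le> M^2 * b^2 / t" using H[OF t0] a0 by simp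
      also have "\<dots> = M^2 * b^2 * s / (M^2 * b^2 + 1)" by (simp add: t_def)
      also have "\<dots> < s" using s by (intro frac_lt) auto
      finally show ?thesis using s by simp
    next
      assume m0: "M * b = 0"
      define t where "t = s / (a^2 + 1)"
      have t0: "t > 0" using s by (simp add: t_def add_nonneg_pos)
      have mb2: "M^2 * b^2 = 0" using m0 by (simp add: power_mult_distrib[symmetric])
      have "2 * s \<le> t * a^2 + 0 / t" using H[OF t0] by (simp only: mb2)
      hence "2 * s \<le> t * a^2" by simp
      also have "\<dots> = s * a^2 / (a^2 + 1)" by (simp add: t_def)
      also have "\<dots> = a^2 * s / (a^2 + 1)" by simp
      also have "\<dots> < s" using s by (intro frac_lt) auto
      finally show ?thesis using s by simp
    qed
  qed
qed



lemma sum_apply_blinfun: "blinfun_apply (\<Sum>i\<in>I. F i) x = (\<Sum>i\<in>I. blinfun_apply (F i) x)"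
  by (induction I rule: infinite_finite_induct) (auto simp: blinfun.add_left)

lemma vn_damped:
  assumes cs: "complex_structure J" and cl: "complex_linear_op J A" and nA: "norm A \<le> 1"
    and fin: "finite S" and dN: "\<And>s. s \<in> S \<Longrightarrow> d s < N" and N0: "N > 0"
    and bd: "\<And>w. norm w = 1 \<Longrightarrow> norm (\<Sum>s\<in>S. b s * w ^ d s) \<le> M"
  shows "norm (\<Sum>s\<in>S. cscale J (b s * of_real (real (N - d s) / real N)) (opow A (d s))) \<le> M"
proof -
  define G where "G = (\<Sum>s\<in>S. cscale J (b s * of_real (real (N - d s) / real N)) (opow A (d s)))"
  define K where "K = 2 * N"
  have K0: "K > 0" using N0 by (simp add: K_def)
  have M0: "0 \<le> M" using bd[of 1] by (meson norm_ge_zero norm_one order_trans)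
  define g where "g z = (\<Sum>s\<in>S. b s * z ^ d s)" for z
  define B where "B z = cscale J (cnj z) A" for z
  have clB: "complex_linear_op J (B z)" for z unfolding B_def by (rule cl_cscale[OF cs cl])
  have nB: "norm (B z) \<le> 1" if "z \<in> rU K" for z
  proof -
    have "norm (B z) \<le> norm (cnj z) * norm A" unfolding B_def by (rule norm_cscale[OF cs])
    also have "\<dots> = norm A" using rU_norm[OF K0 that] by simp
    finally show ?thesis using nA by simp
  qed
  have gM: "norm (g z) \<le> M" if "z \<in> rU K" for z
    unfolding g_def by (rule bd) (rule rU_norm[OF K0 that])
  have key: "inner (G x) y \<le> M * norm x * norm y" for x y
  proof -
    have Gx: "inner (G x) y = Re (\<Sum>s\<in>S. b s * of_real (real (N - d s) / real N) * cinner J (opow A (d s) x) y)"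
    proof -
      have "inner (G x) y = Re (cinner J (G x) y)" by (simp add: cinner_Re)
      also have "cinner J (G x) y = (\<Sum>s\<in>S. b s * of_real (real (N - d s) / real N) * cinner J (opow A (d s) x) y)"
        unfolding G_def sum_apply_blinfun cscale_apply by (simp add: cinner_sum_left cinner_cmul_left[OF cs])
      finally show ?thesis .
    qed
    have avg: "(\<Sum>z\<in>rU K. z ^ k * Cf J (B z) N u v) = of_nat K * of_nat (N - k) * cinner J (opow A k u) v"
      if "k < N" for k u v
      unfolding B_def K_def by (rule avg_Cf[OF cs cl that])
    have sumR: "(\<Sum>z\<in>rU K. Rf (B z) N x (cmul J (cnj (g z)) y)) = real K * real N * inner (G x) y"
    proof -
      have "(\<Sum>z\<in>rU K. Rf (B z) N x (cmul J (cnj (g z)) y)) = Re (\<Sum>z\<in>rU K. g z * Cf J (B z) N x y)"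
        by (simp add: Rf_Cf[where J=J] Cf_cmul_right[OF cs clB] Re_sum)
      also have "(\<Sum>z\<in>rU K. g z * Cf J (B z) N x y) = (\<Sum>s\<in>S. b s * (\<Sum>z\<in>rU K. z ^ d s * Cf J (B z) N x y))"
        unfolding g_def by (simp add: sum_distrib_right sum_distrib_left sum.swap[of _ "rU K" S] mult.assoc)
      also have "\<dots> = (\<Sum>s\<in>S. b s * (of_nat K * of_nat (N - d s) * cinner J (opow A (d s) x) y))"
        by (intro sum.cong refl) (simp only: avg[OF dN])
      also have "\<dots> = of_real (real K * real N) * (\<Sum>s\<in>S. b s * of_real (real (N - d s) / real N) * cinner J (opow A (d s) x) y)"
        using N0 by (simp add: sum_distrib_left algebra_simps)
      finally show ?thesis unfolding Gx by simp
    qed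
    have sumXX: "(\<Sum>z\<in>rU K. Rf (B z) N u u) = real K * real N * (norm u)^2" for u
    proof -
      have "(\<Sum>z\<in>rU K. Rf (B z) N u u) = Re (\<Sum>z\<in>rU K. z ^ 0 * Cf J (B z) N u u)"
        by (simp add: Rf_Cf[where J=J] Re_sum)
      also have "\<dots> = Re (of_nat K * of_nat N * cinner J u u)" using avg[of 0] N0 by simp
      also have "\<dots> = real K * real N * (norm u)^2" by (simp add: cinner_Re power2_norm_eq_inner)
      finally show ?thesis .
    qed
    have each: "2 * Rf (B z) N x (cmul J (cnj (g z)) y) \<le> t * Rf (B z) N x x + M^2 * Rf (B z) N y y / t"
      if z: "z \<in> rU K" and t: "t > 0" for z t
    proof -
      have "2 * Rf (B z) N x (cmul J (cnj (g z)) y) \<le> t * Rf (B z) N x x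
          + Rf (B z) N (cmul J (cnj (g z)) y) (cmul J (cnj (g z)) y) / t"
        by (rule Rf_CS[OF nB[OF z] t])
      also have "Rf (B z) N (cmul J (cnj (g z)) y) (cmul J (cnj (g z)) y) = (norm (g z))^2 * Rf (B z) N y y"
      proof -
        have "Rf (B z) N (cmul J (cnj (g z)) y) (cmul J (cnj (g z)) y)
            = Re (cnj (g z) * g z * Cf J (B z) N y y)"
          by (simp add: Rf_Cf[where J=J] Cf_cmul_right[OF cs clB] Cf_cmul_left[OF cs clB] mult.assoc)
             (simp add: algebra_simps)
        also have "cnj (g z) * g z = of_real ((norm (g z))^2)"
          using complex_norm_square[of "g z"] by (simp only: mult.commute)
        finally show ?thesis by (simp add: Rf_Cf[where J=J])
      qed
      also have "(norm (g z))^2 * Rf (B z) N y y \<le> M^2 * Rf (B z) N y y"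
        using gM[OF z] Rf_nonneg[OF nB[OF z]] by (intro mult_right_mono power_mono) auto
      finally show ?thesis using t by (simp add: divide_right_mono)
    qed
    have "2 * inner (G x) y \<le> t * (norm x)^2 + M^2 * (norm y)^2 / t" if t: "t > 0" for t
    proof -
      have "2 * (real K * real N * inner (G x) y) = (\<Sum>z\<in>rU K. 2 * Rf (B z) N x (cmul J (cnj (g z)) y))"
        unfolding sumR[symmetric] by (simp add: sum_distrib_left)
      also have "\<dots> \<le> (\<Sum>z\<in>rU K. t * Rf (B z) N x x + M^2 * Rf (B z) N y y / t)"
        by (intro sum_mono each t)
      also have "\<dots> = t * (\<Sum>z\<in>rU K. Rf (B z) N x x) + M^2 * (\<Sum>z\<in>rU K. Rf (B z) N y y) / t"
        by (simp add: sum.distrib sum_distrib_left sum_divide_distrib)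
      also have "\<dots> = (real K * real N) * (t * (norm x)^2 + M^2 * (norm y)^2 / t)"
        unfolding sumXX by (simp add: algebra_simps)
      finally have "(real K * real N) * (2 * inner (G x) y) \<le> (real K * real N) * (t * (norm x)^2 + M^2 * (norm y)^2 / t)"
        by (simp add: algebra_simps)
      moreover have "real K * real N > 0" using K0 N0 by simp
      ultimately show ?thesis by (simp add: mult_le_cancel_left_pos)
    qed
    thus ?thesis by (intro amgm_bound) (auto simp: M0)
  qed
  have "norm (G x) \<le> M * norm x" for x
  proof (cases "norm (G x) = 0")
    case True thus ?thesis using M0 by simp
  next
    case False
    have "norm (G x) * norm (G x) = inner (G x) (G x)" by (simp add: power2_norm_eq_inner[symmetric] power2_eq_square)
    also have "\<dots> \<le> M * norm x * norm (G x)" by (rule key)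
    finally have "norm (G x) * norm (G x) \<le> (M * norm x) * norm (G x)" by simp
    thus ?thesis using False by (simp add: mult_le_cancel_right)
  qed
  hence "norm G \<le> M" by (intro norm_blinfun_bound M0)
  thus ?thesis unfolding G_def .
qed



lemma cscale_diff_left: "cscale J (a - b) X = cscale J a X - cscale J b X"
  by (simp add: cscale_def scaleR_diff_left algebra_simps)

lemma von_neumann:
  assumes cs: "complex_structure J" and cl: "complex_linear_op J A" and nA: "norm A \<le> 1"
    and fin: "finite S"
    and bd: "\<And>w. norm w = 1 \<Longrightarrow> norm (\<Sum>s\<in>S. b s * w ^ d s) \<le> M"
  shows "norm (\<Sum>s\<in>S. cscale J (b s) (opow A (d s))) \<le> M"
proof (rule ccontr)
  define L where "L = norm (\<Sum>s\<in>S. cscale J (b s) (opow A (d s)))"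
  assume "\<not> norm (\<Sum>s\<in>S. cscale J (b s) (opow A (d s))) \<le> M"
  hence LM: "L > M" by (simp add: L_def)
  define C where "C = (\<Sum>s\<in>S. norm (b s) * real (d s))"
  have C0: "C \<ge> 0" unfolding C_def by (intro sum_nonneg) auto
  define N where "N = nat \<lceil>C / (L - M)\<rceil> + (\<Sum>s\<in>S. d s) + 1"
  have N0: "N > 0" by (simp add: N_def)
  have dN: "d s < N" if "s \<in> S" for s
    using member_le_sum[OF that _ fin, of d] by (simp add: N_def)
  have "C / (L - M) \<le> real (nat \<lceil>C / (L - M)\<rceil>)" by linarith
  also have "\<dots> < real N" unfolding N_def by linarith
  finally have "C / (L - M) < real N" .
  hence NC: "C / real N < L - M" using LM N0 by (simp add: field_simps)
  define D where "D = (\<Sum>s\<in>S. cscale J (b s * of_real (real (N - d s) / real N)) (opow A (d s)))"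
  have nD: "norm D \<le> M" unfolding D_def by (rule vn_damped[OF cs cl nA fin dN N0 bd])
  define E where "E = (\<Sum>s\<in>S. cscale J (b s * of_real (real (d s) / real N)) (opow A (d s)))"
  have DE: "(\<Sum>s\<in>S. cscale J (b s) (opow A (d s))) = D + E"
  proof -
    have "(\<Sum>s\<in>S. cscale J (b s) (opow A (d s))) - D = E"
      unfolding D_def E_def sum_subtractf[symmetric] cscale_diff_left[symmetric]
    proof (intro sum.cong refl arg_cong2[where f="cscale J"])
      fix s assume s: "s \<in> S"
      have "real (N - d s) = real N - real (d s)" using dN[OF s] by (simp add: of_nat_diff)
      thus "b s - b s * complex_of_real (real (N - d s) / real N) = b s * complex_of_real (real (d s) / real N)"
        using N0 by (simp add: field_simps)
    qed
    thus ?thesis by (simp add: algebra_simps)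
  qed
  have nE: "norm E \<le> C / real N"
  proof -
    have "norm E \<le> (\<Sum>s\<in>S. norm (cscale J (b s * of_real (real (d s) / real N)) (opow A (d s))))"
      unfolding E_def by (rule norm_sum)
    also have "\<dots> \<le> (\<Sum>s\<in>S. norm (b s) * real (d s) / real N)"
    proof (intro sum_mono)
      fix s assume "s \<in> S"
      have "norm (cscale J (b s * of_real (real (d s) / real N)) (opow A (d s)))
          \<le> norm (b s * of_real (real (d s) / real N)) * norm (opow A (d s))" by (rule norm_cscale[OF cs])
      also have "\<dots> \<le> norm (b s * of_real (real (d s) / real N)) * 1"
        by (intro mult_left_mono norm_opow nA) auto
      also have "\<dots> = norm (b s) * real (d s) / real N" by (simp add: norm_mult norm_divide)
      finally show "norm (cscale J (b s * of_real (real (d s) / real N)) (opow A (d s))) \<le> norm (b s) * real (d s) / real N" .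
    qed
    also have "\<dots> = C / real N" by (simp add: C_def sum_divide_distrib)
    finally show ?thesis .
  qed
  have "L \<le> norm D + norm E" unfolding L_def DE by (rule norm_triangle_ineq)
  also have "\<dots> < M + (L - M)" using nD nE NC by linarith
  finally show False by simp
qed



definition Aop :: "('a::real_normed_vector \<Rightarrow>\<^sub>L 'a) \<Rightarrow> ('n::finite \<Rightarrow> ('a \<Rightarrow>\<^sub>L 'a)) \<Rightarrow> ('n \<Rightarrow> complex) \<Rightarrow> ('a \<Rightarrow>\<^sub>L 'a)" where
  "Aop J T \<zeta> = (\<Sum>i\<in>UNIV. cscale J (\<zeta> i) (T i))"

definition monw :: "('n::finite \<Rightarrow> complex) \<Rightarrow> 'n list \<Rightarrow> complex" where
  "monw \<zeta> w = (\<Prod>j\<in>UNIV. \<zeta> j ^ count_list w j)"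

lemma words_finite: "finite {w::'n::finite list. length w = k}"
  using finite_lists_length_eq[of "UNIV::'n set" k] by simp

lemma monw_Cons: "monw \<zeta> (i # w) = \<zeta> i * monw \<zeta> w"
proof -
  have "monw \<zeta> (i # w) = (\<Prod>j\<in>UNIV. (if j = i then \<zeta> j else 1) * \<zeta> j ^ count_list w j)"
    unfolding monw_def by (intro prod.cong refl) auto
  also have "\<dots> = \<zeta> i * monw \<zeta> w" by (simp add: prod.distrib monw_def)
  finally show ?thesis .
qed

lemma word_prod_Cons: "blinfun_apply (word_prod T (i # w)) x = T i (word_prod T w x)"
  by (simp add: word_prod_def)

lemma sum_words_Suc:
  "(\<Sum>w\<in>{w::'n::finite list. length w = Suc k}. f w) = (\<Sum>i\<in>UNIV. \<Sum>w\<in>{w. length w = k}. f (i # w))"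
proof -
  have eq: "{w::'n list. length w = Suc k} = (\<lambda>(i, w). i # w) ` (UNIV \<times> {w. length w = k})"
  proof
    show "{w::'n list. length w = Suc k} \<subseteq> (\<lambda>(i, w). i # w) ` (UNIV \<times> {w. length w = k})"
    proof
      fix w :: "'n list" assume "w \<in> {w. length w = Suc k}"
      then obtain i v where "w = i # v" "length v = k" by (cases w) auto
      thus "w \<in> (\<lambda>(i, w). i # w) ` (UNIV \<times> {w. length w = k})" by force
    qed
  qed auto
  have inj: "inj_on (\<lambda>(i, w). i # w) (UNIV \<times> {w::'n list. length w = k})"
    by (auto simp: inj_on_def)
  show ?thesis
    unfolding eq sum.reindex[OF inj] sum.cartesian_product by (simp add: split_def)
qed

lemma expand:
  assumes cs: "complex_structure J" and cl: "\<And>i. complex_linear_op J (T i)"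
  shows "opow (Aop J T \<zeta>) k x = (\<Sum>w\<in>{w. length w = k}. cmul J (monw \<zeta> w) (word_prod T w x))"
proof (induction k)
  case 0
  have "{w::'n list. length w = 0} = {[]}" by auto
  thus ?case by (simp add: monw_def word_prod_def)
next
  case (Suc k)
  have "opow (Aop J T \<zeta>) (Suc k) x = Aop J T \<zeta> (\<Sum>w\<in>{w. length w = k}. cmul J (monw \<zeta> w) (word_prod T w x))"
    using Suc by simp
  also have "\<dots> = (\<Sum>i\<in>UNIV. \<Sum>w\<in>{w. length w = k}. cmul J (\<zeta> i * monw \<zeta> w) (T i (word_prod T w x)))"
    unfolding Aop_def sum_apply_blinfun cscale_apply
    by (simp add: blinfun.sum_right cmul_sum_right cl_cmul[OF cl] cmul_mult[OF cs])
  also have "\<dots> = (\<Sum>w\<in>{w. length w = Suc k}. cmul J (monw \<zeta> w) (word_prod T w x))"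
    unfolding sum_words_Suc by (simp add: monw_Cons word_prod_Cons)
  finally show ?case .
qed

definition Mal :: "('n::finite \<Rightarrow> nat) \<Rightarrow> 'n multiset" where
  "Mal \<alpha> = (\<Sum>j\<in>UNIV. replicate_mset (\<alpha> j) j)"

lemma count_Mal: "count (Mal \<alpha>) j = \<alpha> j"
  unfolding Mal_def count_sum by (simp add: count_replicate_mset)

lemma orderings_eq: "orderings \<alpha> = permutations_of_multiset (Mal \<alpha>)"
proof -
  have "w \<in> orderings \<alpha> \<longleftrightarrow> mset w = Mal \<alpha>" for w
  proof
    assume "w \<in> orderings \<alpha>"
    thus "mset w = Mal \<alpha>" by (auto simp: orderings_def multiset_eq_iff count_Mal count_mset)
  next
    assume h: "mset w = Mal \<alpha>"
    hence c: "\<forall>j. count_list w j = \<alpha> j" by (metis count_Mal count_mset)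
    have "length w = (\<Sum>j\<in>UNIV. count_list w j)" by (simp add: sum_count_set)
    also have "\<dots> = mi_deg \<alpha>" using c by (simp add: mi_deg_def)
    finally show "w \<in> orderings \<alpha>" using c by (simp add: orderings_def)
  qed
  thus ?thesis by (auto simp: permutations_of_multiset_def)
qed

lemma size_Mal: "size (Mal \<alpha>) = mi_deg \<alpha>"
proof -
  obtain w where "w \<in> permutations_of_multiset (Mal \<alpha>)"
    using permutations_of_multiset_not_empty by blast
  hence "w \<in> orderings \<alpha>" "mset w = Mal \<alpha>"
    by (simp_all add: orderings_eq permutations_of_multisetD)
  thus ?thesis by (metis (mono_tags, lifting) mem_Collect_eq orderings_def size_mset)
qed

lemma card_orderings:
  "real (card (orderings \<alpha>)) * (\<Prod>j\<in>UNIV. fact (\<alpha> j)) = fact (mi_deg \<alpha>)"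
proof -
  have "card (orderings \<alpha>) * (\<Prod>x\<in>set_mset (Mal \<alpha>). fact (count (Mal \<alpha>) x)) = fact (size (Mal \<alpha>))"
    unfolding orderings_eq by (rule card_permutations_of_multiset_aux)
  moreover have "(\<Prod>x\<in>set_mset (Mal \<alpha>). fact (count (Mal \<alpha>) x)) = (\<Prod>j\<in>UNIV. fact (\<alpha> j) :: nat)"
    unfolding count_Mal
  proof (rule prod.mono_neutral_left)
    show "\<forall>i\<in>UNIV - set_mset (Mal \<alpha>). fact (\<alpha> i) = (1::nat)"
    proof
      fix x assume "x \<in> UNIV - set_mset (Mal \<alpha>)"
      hence "count (Mal \<alpha>) x = 0" by (simp add: not_in_iff)
      thus "fact (\<alpha> x) = (1::nat)" by (simp add: count_Mal)
    qed
  qed auto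
  ultimately have "card (orderings \<alpha>) * (\<Prod>j\<in>UNIV. fact (\<alpha> j) :: nat) = fact (mi_deg \<alpha>)"
    by (simp add: size_Mal)
  hence "real (card (orderings \<alpha>) * (\<Prod>j\<in>UNIV. fact (\<alpha> j) :: nat)) = real (fact (mi_deg \<alpha>))" by simp
  thus ?thesis by (simp add: of_nat_prod)
qed



lemma poly_bound:
  assumes "z \<in> closed_polydisc"
  shows "norm (poly_eval c z) \<le> (\<Sum>\<alpha>\<in>{\<alpha>. c \<alpha> \<noteq> 0}. norm (c \<alpha>))"
proof -
  have "norm (poly_eval c z) \<le> (\<Sum>\<alpha>\<in>{\<alpha>. c \<alpha> \<noteq> 0}. norm (c \<alpha> * (\<Prod>j\<in>UNIV. z j ^ \<alpha> j)))"
    unfolding poly_eval_def by (rule norm_sum)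
  also have "\<dots> \<le> (\<Sum>\<alpha>\<in>{\<alpha>. c \<alpha> \<noteq> 0}. norm (c \<alpha>))"
  proof (rule sum_mono)
    fix \<alpha>
    have "norm (\<Prod>j\<in>UNIV. z j ^ \<alpha> j) \<le> (\<Prod>j\<in>UNIV. norm (z j ^ \<alpha> j))" by (rule norm_prod_le)
    also have "\<dots> \<le> 1"
      using assms by (intro prod_le_1) (auto simp: closed_polydisc_def norm_power power_le_one)
    finally show "norm (c \<alpha> * (\<Prod>j\<in>UNIV. z j ^ \<alpha> j)) \<le> norm (c \<alpha>)"
      by (simp add: norm_mult mult_left_le)
  qed
  finally show ?thesis .
qed

lemma sup_upper:
  assumes "z \<in> closed_polydisc" shows "norm (poly_eval c z) \<le> sup_norm_polydisc c"
  unfolding sup_norm_polydisc_def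
  by (rule cSUP_upper[OF assms]) (rule bdd_aboveI2, rule poly_bound)

theorem proposition4p2:
  fixes J :: "'a::{real_inner,complete_space} \<Rightarrow>\<^sub>L 'a"
    and T :: "'n::finite \<Rightarrow> ('a \<Rightarrow>\<^sub>L 'a)"
    and c :: "('n \<Rightarrow> nat) \<Rightarrow> complex"
  assumes "complex_structure J"
    and "\<forall>i. complex_linear_op J (T i)"
    and "\<forall>\<zeta>::'n \<Rightarrow> complex. (\<forall>i. norm (\<zeta> i) \<le> 1) \<longrightarrow>
           norm (\<Sum>i\<in>UNIV. cscale J (\<zeta> i) (T i)) \<le> 1"
    and "is_poly c"
  shows "norm (sym_eval J c T) \<le> sup_norm_polydisc (Gamma_poly c)"
proof -
  note cs = assms(1)
  have clT: "\<And>i. complex_linear_op J (T i)" using assms(2) by simp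
  have hyp: "\<And>\<zeta>. (\<And>i. norm (\<zeta> i) \<le> 1) \<Longrightarrow> norm (Aop J T \<zeta>) \<le> 1"
    using assms(3) unfolding Aop_def by blast
  define S where "S = {\<alpha>. c \<alpha> \<noteq> 0}"
  have finS: "finite S" using assms(4) by (simp add: is_poly_def S_def)
  define \<Gamma> where "\<Gamma> = Gamma_poly c"
  define r :: "('n \<Rightarrow> nat) \<Rightarrow> real" where "r \<alpha> = ((\<Prod>j\<in>UNIV. fact (\<alpha> j)) / fact (mi_deg \<alpha>) :: real)" for \<alpha>
  have r_pos: "r \<alpha> > 0" for \<alpha> unfolding r_def by (intro divide_pos_pos prod_pos) auto
  have \<Gamma>_eq: "\<Gamma> \<alpha> = c \<alpha> * of_real (r \<alpha>)" for \<alpha> by (simp add: \<Gamma>_def Gamma_poly_def r_def)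
  have supp\<Gamma>: "{\<alpha>. \<Gamma> \<alpha> \<noteq> 0} = S" using r_pos by (auto simp: \<Gamma>_eq S_def) (metis less_irrefl)
  have r_card: "r \<alpha> = 1 / real (card (orderings \<alpha>))" for \<alpha>
  proof -
    have h: "real (card (orderings \<alpha>)) * (\<Prod>j\<in>UNIV. fact (\<alpha> j)) = fact (mi_deg \<alpha>)"
      by (rule card_orderings)
    have "real (card (orderings \<alpha>)) \<noteq> 0" using h by (metis fact_nonzero mult_eq_0_iff)
    thus ?thesis unfolding r_def using h by (simp add: field_simps)
  qed
  define K where "K = Suc (\<Sum>\<alpha>\<in>S. mi_deg \<alpha>)"
  have K0: "K > 0" by (simp add: K_def)
  have degK: "mi_deg \<alpha> < K" if "\<alpha> \<in> S" for \<alpha>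
    using member_le_sum[OF that _ finS, of mi_deg] by (simp add: K_def)
  have aK: "\<alpha> j < K" if "\<alpha> \<in> S" for \<alpha> j
  proof -
    have "\<alpha> j \<le> mi_deg \<alpha>" unfolding mi_deg_def by (rule member_le_sum) auto
    thus ?thesis using degK[OF that] by simp
  qed
  define TU where "TU = PiE (UNIV::'n set) (\<lambda>_. rU K)"
  have finTU: "finite TU" unfolding TU_def by (intro finite_PiE) (auto simp: rU_finite[OF K0])
  have cardTU: "card TU = K ^ CARD('n)" unfolding TU_def by (simp add: card_PiE rU_card[OF K0])
  have TUnorm: "norm (\<zeta> j) = 1" if "\<zeta> \<in> TU" for \<zeta> j
    using that rU_norm[OF K0] by (auto simp: TU_def PiE_def Pi_def)
  define b where "b \<zeta> \<alpha> = \<Gamma> \<alpha> * (\<Prod>j\<in>UNIV. cnj (\<zeta> j) ^ \<alpha> j)" for \<zeta> \<alpha>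
  define G where "G \<zeta> = (\<Sum>\<alpha>\<in>S. cscale J (b \<zeta> \<alpha>) (opow (Aop J T \<zeta>) (mi_deg \<alpha>)))" for \<zeta>
  define Msup where "Msup = sup_norm_polydisc \<Gamma>"
  have Gbound: "norm (G \<zeta>) \<le> Msup" if \<zeta>: "\<zeta> \<in> TU" for \<zeta>
    unfolding G_def
  proof (rule von_neumann[OF cs _ _ finS])
    show "complex_linear_op J (Aop J T \<zeta>)" unfolding Aop_def
      by (intro cl_sum cl_cscale[OF cs] clT)
    show "norm (Aop J T \<zeta>) \<le> 1" using TUnorm[OF \<zeta>] by (intro hyp) simp
    fix w :: complex assume w: "norm w = 1"
    define z where "z j = w * cnj (\<zeta> j)" for j
    have zin: "z \<in> closed_polydisc" using TUnorm[OF \<zeta>] w by (simp add: closed_polydisc_def z_def norm_mult)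
    have "poly_eval \<Gamma> z = (\<Sum>\<alpha>\<in>S. b \<zeta> \<alpha> * w ^ mi_deg \<alpha>)"
      unfolding poly_eval_def supp\<Gamma>
    proof (intro sum.cong refl)
      fix \<alpha>
      have "(\<Prod>j\<in>UNIV. z j ^ \<alpha> j) = (\<Prod>j\<in>UNIV. w ^ \<alpha> j) * (\<Prod>j\<in>UNIV. cnj (\<zeta> j) ^ \<alpha> j)"
        by (simp add: z_def power_mult_distrib prod.distrib)
      also have "(\<Prod>j\<in>UNIV. w ^ \<alpha> j) = w ^ mi_deg \<alpha>" by (simp add: mi_deg_def power_sum)
      finally show "\<Gamma> \<alpha> * (\<Prod>j\<in>UNIV. z j ^ \<alpha> j) = b \<zeta> \<alpha> * w ^ mi_deg \<alpha>"
        by (simp add: b_def mult_ac)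
    qed
    thus "norm (\<Sum>\<alpha>\<in>S. b \<zeta> \<alpha> * w ^ mi_deg \<alpha>) \<le> Msup"
      using sup_upper[OF zin, of \<Gamma>] by (simp add: Msup_def)
  qed
  have per\<alpha>: "(1 / real K ^ CARD('n)) *\<^sub>R (\<Sum>\<zeta>\<in>TU. cmul J (b \<zeta> \<alpha>) (opow (Aop J T \<zeta>) (mi_deg \<alpha>) x))
      = cmul J (\<Gamma> \<alpha>) (\<Sum>w\<in>orderings \<alpha>. word_prod T w x)" if \<alpha>: "\<alpha> \<in> S" for \<alpha> x
  proof -
    define W where "W = {w::'n list. length w = mi_deg \<alpha>}"
    have finW: "finite W" unfolding W_def by (rule words_finite)
    have orth: "(\<Sum>\<zeta>\<in>TU. b \<zeta> \<alpha> * monw \<zeta> w) = \<Gamma> \<alpha> * (if (\<lambda>j. count_list w j) = \<alpha> then of_nat K ^ CARD('n) else 0)"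
      if w: "w \<in> W" for w
    proof -
      have "(\<Sum>\<zeta>\<in>TU. b \<zeta> \<alpha> * monw \<zeta> w) = \<Gamma> \<alpha> * (\<Sum>\<zeta>\<in>TU. \<Prod>j\<in>UNIV. \<zeta> j ^ count_list w j * cnj (\<zeta> j) ^ \<alpha> j)"
        by (simp add: b_def monw_def sum_distrib_left prod.distrib mult_ac)
      also have "(\<Sum>\<zeta>\<in>TU. \<Prod>j\<in>UNIV. \<zeta> j ^ count_list w j * cnj (\<zeta> j) ^ \<alpha> j)
          = (if (\<lambda>j. count_list w j) = \<alpha> then of_nat K ^ CARD('n) else 0)"
        unfolding TU_def
      proof (rule torus_orth[OF K0])
        fix j
        have "count_list w j \<le> length w" by (rule count_le_length)
        thus "count_list w j < K" using w degK[OF \<alpha>] by (simp add: W_def)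
        show "\<alpha> j < K" by (rule aK[OF \<alpha>])
      qed
      finally show ?thesis .
    qed
    have "(\<Sum>\<zeta>\<in>TU. cmul J (b \<zeta> \<alpha>) (opow (Aop J T \<zeta>) (mi_deg \<alpha>) x))
        = (\<Sum>\<zeta>\<in>TU. \<Sum>w\<in>W. cmul J (b \<zeta> \<alpha> * monw \<zeta> w) (word_prod T w x))"
      unfolding expand[OF cs clT] W_def by (simp add: cmul_sum_right cmul_mult[OF cs])
    also have "\<dots> = (\<Sum>w\<in>W. cmul J (\<Sum>\<zeta>\<in>TU. b \<zeta> \<alpha> * monw \<zeta> w) (word_prod T w x))"
      by (simp add: sum.swap[of _ TU W] cmul_sum_left)
    also have "\<dots> = (\<Sum>w\<in>W. cmul J (\<Gamma> \<alpha> * (if (\<lambda>j. count_list w j) = \<alpha> then of_nat K ^ CARD('n) else 0)) (word_prod T w x))"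
      by (intro sum.cong refl) (simp add: orth)
    finally have e1: "(\<Sum>\<zeta>\<in>TU. cmul J (b \<zeta> \<alpha>) (opow (Aop J T \<zeta>) (mi_deg \<alpha>) x)) = \<dots>" .
    have "(1 / real K ^ CARD('n)) *\<^sub>R (\<Sum>w\<in>W. cmul J (\<Gamma> \<alpha> * (if (\<lambda>j. count_list w j) = \<alpha> then of_nat K ^ CARD('n) else 0)) (word_prod T w x))
       = (\<Sum>w\<in>W. if (\<lambda>j. count_list w j) = \<alpha> then cmul J (\<Gamma> \<alpha>) (word_prod T w x) else 0)"
    proof -
      have pw: "(1 / real K ^ CARD('n)) *\<^sub>R cmul J (\<Gamma> \<alpha> * (if P then of_nat K ^ CARD('n) else 0)) v
          = (if P then cmul J (\<Gamma> \<alpha>) v else 0)" for P v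
      proof (cases P)
        case True
        have kk: "(of_nat K ^ CARD('n) :: complex) = of_real (real K ^ CARD('n))" by simp
        have "cmul J (\<Gamma> \<alpha> * of_nat K ^ CARD('n)) v = (real K ^ CARD('n)) *\<^sub>R cmul J (\<Gamma> \<alpha>) v"
          unfolding kk cmul_mult[OF cs] cmul_of_real cmul_scaleR_right ..
        thus ?thesis using True K0 by simp
      qed simp
      show ?thesis unfolding scaleR_sum_right by (intro sum.cong refl) (rule pw)
    qed
    also have "\<dots> = (\<Sum>w\<in>{w\<in>W. (\<lambda>j. count_list w j) = \<alpha>}. cmul J (\<Gamma> \<alpha>) (word_prod T w x))"
      by (rule sum.inter_filter[OF finW, symmetric])
    also have "{w\<in>W. (\<lambda>j. count_list w j) = \<alpha>} = orderings \<alpha>"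
      by (auto simp: W_def orderings_def fun_eq_iff)
    finally show ?thesis using e1 by (simp add: cmul_sum_right)
  qed
  have ident: "sym_eval J c T = (1 / real K ^ CARD('n)) *\<^sub>R (\<Sum>\<zeta>\<in>TU. G \<zeta>)"
  proof (rule blinfun_eqI)
    fix x
    have "sym_eval J c T x = (\<Sum>\<alpha>\<in>S. cmul J (\<Gamma> \<alpha>) (\<Sum>w\<in>orderings \<alpha>. word_prod T w x))"
      unfolding sym_eval_def S_def[symmetric] sum_apply_blinfun cscale_apply sym_monomial_def
    proof (intro sum.cong refl)
      fix \<alpha>
      show "cmul J (c \<alpha>) (blinfun_apply ((1 / real (card (orderings \<alpha>))) *\<^sub>R (\<Sum>w\<in>orderings \<alpha>. word_prod T w)) x)
         = cmul J (\<Gamma> \<alpha>) (\<Sum>w\<in>orderings \<alpha>. blinfun_apply (word_prod T w) x)"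
      proof -
        have "blinfun_apply ((1 / real (card (orderings \<alpha>))) *\<^sub>R (\<Sum>w\<in>orderings \<alpha>. word_prod T w)) x
           = (1 / real (card (orderings \<alpha>))) *\<^sub>R (\<Sum>w\<in>orderings \<alpha>. blinfun_apply (word_prod T w) x)"
          by (simp add: blinfun.scaleR_left sum_apply_blinfun)
        moreover have "cmul J (\<Gamma> \<alpha>) v = cmul J (c \<alpha>) ((1 / real (card (orderings \<alpha>))) *\<^sub>R v)" for v
          unfolding \<Gamma>_eq r_card cmul_mult[OF cs] cmul_of_real ..
        ultimately show ?thesis by simp
      qed
    qed
    also have "\<dots> = (\<Sum>\<alpha>\<in>S. (1 / real K ^ CARD('n)) *\<^sub>R (\<Sum>\<zeta>\<in>TU. cmul J (b \<zeta> \<alpha>) (opow (Aop J T \<zeta>) (mi_deg \<alpha>) x)))"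
      by (intro sum.cong refl) (simp add: per\<alpha>)
    also have "\<dots> = ((1 / real K ^ CARD('n)) *\<^sub>R (\<Sum>\<zeta>\<in>TU. G \<zeta>)) x"
      unfolding G_def by (simp add: sum_apply_blinfun cscale_apply scaleR_sum_right sum.swap[of _ S TU] blinfun.scaleR_left)
    finally show "sym_eval J c T x = ((1 / real K ^ CARD('n)) *\<^sub>R (\<Sum>\<zeta>\<in>TU. G \<zeta>)) x" .
  qed
  have "norm (sym_eval J c T) = (1 / real K ^ CARD('n)) * norm (\<Sum>\<zeta>\<in>TU. G \<zeta>)"
    unfolding ident by simp
  also have "\<dots> \<le> (1 / real K ^ CARD('n)) * (\<Sum>\<zeta>\<in>TU. norm (G \<zeta>))"
    by (intro mult_left_mono norm_sum) auto
  also have "\<dots> \<le> (1 / real K ^ CARD('n)) * (\<Sum>\<zeta>\<in>TU. Msup)"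
    by (intro mult_left_mono sum_mono Gbound) auto
  also have "\<dots> = Msup" using K0 by (simp add: cardTU)
  finally show ?thesis by (simp add: Msup_def \<Gamma>_def)
qed

end
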